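(* Let $(x_{1}^{(k)},\ldots,x_{n_k}^{(k)})$, $k=1,\ldots,N$, be independent samples of sizes $n_1,\ldots,n_N$ from $s$-variate populations $F_{1}(x-\theta),\ldots,F_{N}(x-\theta)$, $x,\theta\in\mathbb{R}^s$, with finite second moments. Let $t_{n_k}^{(k)}$ be the Pitman estimator (minimum covariance matrix equivariant estimator) of $\theta$ from the $k$-th sample, and let $t_{n}^{(1,\ldots,N)}$ be the Pitman estimator of $\theta$ from the pooled sample $(x_{1}^{(1)},\ldots,x_{n_N}^{(N)})$ of size $n=n_1+\ldots+n_N$. Assume the covariance matrices of all these Pitman estimators are nonsingular. Then \[ V^{-1}(t_{n}^{(1,\ldots,N)})\geq V^{-1}(t_{n_1}^{(1)})+\ldots+V^{-1}(t_{n_N}^{(N)}), \] where $V(t)$ denotes the covariance matrix of a random vector $t$ and $A\geq B$ means that $A-B$ is non-negative definite.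
   Context: Multivariate location-parameter setting: the Pitman estimator of an $s$-variate location parameter is the equivariant estimator whose covariance matrix is minimal (in the Loewner order) among covariance matrices of equivariant estimators. This is the multivariate form of the univariate superadditivity $1/\mathrm{var}(t_{n}^{(1,\ldots,N)})\geq \sum_k 1/\mathrm{var}(t_{n_k}^{(k)})$ for combining independent samples from different populations. *)

theory Defs
  imports "HOL-Probability.Probability"
begin

definition population :: "(real^'s) measure \<Rightarrow> bool" where
  "population F \<longleftrightarrow> prob_space F \<and> sets F = sets borel \<and>
     integrable F (\<lambda>x. (norm x)\<^sup>2)"

text \<open>Distribution F(x - \<theta>): the law of X + \<theta> where X has law F.\<close>
definition shifted :: "(real^'s) measure \<Rightarrow> real^'s \<Rightarrow> (real^'s) measure" where
  "shifted F \<theta> = distr F borel (\<lambda>x. x + \<theta>)"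

definition sample_law ::
  "'i set \<Rightarrow> ('i \<Rightarrow> (real^'s) measure) \<Rightarrow> real^'s \<Rightarrow> ('i \<Rightarrow> real^'s) measure" where
  "sample_law I Fs \<theta> = PiM I (\<lambda>i. shifted (Fs i) \<theta>)"

definition equivariant :: "'i set \<Rightarrow> (('i \<Rightarrow> real^'s) \<Rightarrow> real^'s) \<Rightarrow> bool" where
  "equivariant I T \<longleftrightarrow>
     T \<in> borel_measurable (PiM I (\<lambda>_. (borel :: (real^'s) measure))) \<and>
     (\<forall>x \<in> I \<rightarrow>\<^sub>E UNIV. \<forall>c. T (\<lambda>i\<in>I. x i + c) = T x + c)"

definition cov_matrix :: "'a measure \<Rightarrow> ('a \<Rightarrow> real^'s) \<Rightarrow> real^'s^'s" where
  "cov_matrix M X = (\<chi> i j. \<integral>x. (X x $ i - (\<integral>y. X y $ i \<partial>M)) *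
                               (X x $ j - (\<integral>y. X y $ j \<partial>M)) \<partial>M)"

definition admissible_est ::
  "'i set \<Rightarrow> ('i \<Rightarrow> (real^'s) measure) \<Rightarrow> (('i \<Rightarrow> real^'s) \<Rightarrow> real^'s) \<Rightarrow> bool" where
  "admissible_est I Fs T \<longleftrightarrow> equivariant I T \<and>
     (\<forall>\<theta>. integrable (sample_law I Fs \<theta>) (\<lambda>x. (norm (T x))\<^sup>2))"

definition nonneg_def :: "real^'s^'s \<Rightarrow> bool" where
  "nonneg_def A \<longleftrightarrow> (\<forall>v. 0 \<le> v \<bullet> (A *v v))"

definition loewner_le :: "real^'s^'s \<Rightarrow> real^'s^'s \<Rightarrow> bool" where
  "loewner_le A B \<longleftrightarrow> nonneg_def (B - A)"

definition pitman ::
  "'i set \<Rightarrow> ('i \<Rightarrow> (real^'s) measure) \<Rightarrow> (('i \<Rightarrow> real^'s) \<Rightarrow> real^'s) \<Rightarrow> bool" where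
  "pitman I Fs T \<longleftrightarrow> admissible_est I Fs T \<and>
     (\<forall>T' \<theta>. admissible_est I Fs T' \<longrightarrow>
        loewner_le (cov_matrix (sample_law I Fs \<theta>) T) (cov_matrix (sample_law I Fs \<theta>) T'))"

end

theory Submission
  imports Defs
begin

definition symf :: "real^'s^'s \<Rightarrow> bool" where
  "symf A \<longleftrightarrow> (\<forall>x y. x \<bullet> (A *v y) = y \<bullet> (A *v x))"

lemma matrix_inv_both:
  fixes A :: "real^'s^'s"
  assumes "invertible A"
  shows "A ** matrix_inv A = mat 1" "matrix_inv A ** A = mat 1"
proof -
  have "\<exists>A'. A ** A' = mat 1 \<and> A' ** A = mat 1" using assms unfolding invertible_def by blast
  hence "A ** matrix_inv A = mat 1 \<and> matrix_inv A ** A = mat 1"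
    unfolding matrix_inv_def by (rule someI_ex)
  thus "A ** matrix_inv A = mat 1" "matrix_inv A ** A = mat 1" by auto
qed

lemma matrix_inv_vec:
  fixes A :: "real^'s^'s"
  assumes "invertible A"
  shows "A *v (matrix_inv A *v x) = x" "matrix_inv A *v (A *v x) = x"
  using matrix_inv_both[OF assms] by (simp_all add: matrix_vector_mul_assoc)

lemma symf_inv:
  fixes A :: "real^'s^'s"
  assumes "invertible A" "symf A"
  shows "symf (matrix_inv A)"
  unfolding symf_def
proof (intro allI)
  fix x y :: "real^'s"
  let ?W = "matrix_inv A"
  have "x \<bullet> (?W *v y) = (A *v (?W *v x)) \<bullet> (?W *v y)" using matrix_inv_vec[OF assms(1)] by simp
  also have "\<dots> = (?W *v y) \<bullet> (A *v (?W *v x))" by (simp add: inner_commute)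
  also have "\<dots> = (?W *v x) \<bullet> (A *v (?W *v y))" using assms(2) unfolding symf_def by metis
  also have "\<dots> = (?W *v x) \<bullet> y" using matrix_inv_vec[OF assms(1)] by simp
  finally show "x \<bullet> (?W *v y) = y \<bullet> (?W *v x)" by (simp add: inner_commute)
qed

lemma psd_kernel:
  fixes P :: "real^'s^'s"
  assumes sym: "symf P" and psd: "\<And>v. 0 \<le> v \<bullet> (P *v v)" and z: "z \<bullet> (P *v z) = 0"
  shows "P *v z = 0"
proof (rule ccontr)
  assume nz: "P *v z \<noteq> 0"
  define a where "a = P *v z"
  define b where "b = a \<bullet> (P *v a)"
  have a0: "a \<bullet> a > 0" using nz a_def by simp
  have b0: "b \<ge> 0" using psd b_def by simp
  have za: "z \<bullet> (P *v a) = a \<bullet> a" using sym unfolding symf_def a_def by metis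
  define t where "t = (a \<bullet> a) / (b + 1)"
  have t0: "t > 0" using a0 b0 t_def by simp
  have "(z - t *\<^sub>R a) \<bullet> (P *v (z - t *\<^sub>R a)) = z \<bullet> (P *v z) - t * (z \<bullet> (P *v a)) - t * (a \<bullet> (P *v z)) + t*t*(a \<bullet> (P *v a))"
    by (simp add: matrix_vector_mult_diff_distrib matrix_vector_mult_scaleR inner_diff_left inner_diff_right algebra_simps)
  also have "\<dots> = t * (t * b - 2 * (a \<bullet> a))" using z za a_def b_def by (simp add: algebra_simps)
  finally have eq: "(z - t *\<^sub>R a) \<bullet> (P *v (z - t *\<^sub>R a)) = t * (t * b - 2 * (a \<bullet> a))" .
  have "t * b = (a \<bullet> a) * (b / (b+1))" using t_def b0 by (simp add: field_simps)
  also have "\<dots> < (a \<bullet> a) * 1" using a0 b0 by (intro mult_strict_left_mono) auto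
  finally have "t * b - 2 * (a \<bullet> a) < 0" using a0 by linarith
  hence "t * (t * b - 2 * (a \<bullet> a)) < 0" using t0 by (simp add: mult_pos_neg)
  with eq psd[of "z - t *\<^sub>R a"] show False by simp
qed

definition SQ :: "'a measure \<Rightarrow> ('a \<Rightarrow> 'b::real_normed_vector) \<Rightarrow> bool" where
  "SQ M f \<longleftrightarrow> f \<in> borel_measurable M \<and> integrable M (\<lambda>x. (norm (f x))\<^sup>2)"

lemma bl_meas:
  assumes "bounded_linear h" "g \<in> borel_measurable M"
  shows "(\<lambda>x. h (g x)) \<in> borel_measurable M"
  by (rule borel_measurable_continuous_on[OF linear_continuous_on[OF assms(1)] assms(2)])

lemma SQ_bound:
  fixes f :: "'a \<Rightarrow> 'b::real_normed_vector" and g :: "'a \<Rightarrow> 'c::real_normed_vector"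
  assumes "SQ M f" "g \<in> borel_measurable M" "\<And>x. x \<in> space M \<Longrightarrow> norm (g x) \<le> K * norm (f x)"
  shows "SQ M g"
  unfolding SQ_def
proof
  show "g \<in> borel_measurable M" by fact
  have i: "integrable M (\<lambda>x. K\<^sup>2 * (norm (f x))\<^sup>2)" using assms(1) unfolding SQ_def by simp
  show "integrable M (\<lambda>x. (norm (g x))\<^sup>2)"
  proof (rule Bochner_Integration.integrable_bound[OF i])
    show "(\<lambda>x. (norm (g x))\<^sup>2) \<in> borel_measurable M" using assms(2) by measurable
    show "AE x in M. norm ((norm (g x))\<^sup>2) \<le> norm (K\<^sup>2 * (norm (f x))\<^sup>2)"
    proof (rule AE_I2)
      fix x assume x: "x \<in> space M"
      have "norm (g x) \<le> \<bar>K\<bar> * norm (f x)" using assms(3)[OF x]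
        by (meson abs_ge_self dual_order.trans mult_right_mono norm_ge_zero)
      hence "(norm (g x))\<^sup>2 \<le> (\<bar>K\<bar> * norm (f x))\<^sup>2" by (intro power_mono) auto
      thus "norm ((norm (g x))\<^sup>2) \<le> norm (K\<^sup>2 * (norm (f x))\<^sup>2)"
        by (simp add: power_mult_distrib)
    qed
  qed
qed

lemma SQ_add:
  fixes f g :: "'a \<Rightarrow> 'b::{real_normed_vector, second_countable_topology}"
  assumes "SQ M f" "SQ M g"
  shows "SQ M (\<lambda>x. f x + g x)"
  unfolding SQ_def
proof
  show m: "(\<lambda>x. f x + g x) \<in> borel_measurable M" using assms unfolding SQ_def by auto
  have i: "integrable M (\<lambda>x. 2 * (norm (f x))\<^sup>2 + 2 * (norm (g x))\<^sup>2)" using assms unfolding SQ_def by auto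
  show "integrable M (\<lambda>x. (norm (f x + g x))\<^sup>2)"
  proof (rule Bochner_Integration.integrable_bound[OF i])
    show "(\<lambda>x. (norm (f x + g x))\<^sup>2) \<in> borel_measurable M" using m by measurable
    show "AE x in M. norm ((norm (f x + g x))\<^sup>2) \<le> norm (2 * (norm (f x))\<^sup>2 + 2 * (norm (g x))\<^sup>2)"
    proof (rule AE_I2)
      fix x
      have "(norm (f x + g x))\<^sup>2 \<le> (norm (f x) + norm (g x))\<^sup>2"
        by (intro power_mono norm_triangle_ineq) auto
      also have "\<dots> \<le> 2 * (norm (f x))\<^sup>2 + 2 * (norm (g x))\<^sup>2"
        using zero_le_power2[of "norm (f x) - norm (g x)"] by (simp only: power2_diff power2_sum; linarith?)
      finally show "norm ((norm (f x + g x))\<^sup>2) \<le> norm (2 * (norm (f x))\<^sup>2 + 2 * (norm (g x))\<^sup>2)"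
        by simp
    qed
  qed
qed

lemma SQ_zero: "SQ M (\<lambda>x. 0)" unfolding SQ_def by simp

lemma SQ_sum:
  fixes f :: "'i \<Rightarrow> 'a \<Rightarrow> 'b::{real_normed_vector, second_countable_topology}"
  assumes "\<And>k. k \<in> K \<Longrightarrow> SQ M (f k)"
  shows "SQ M (\<lambda>x. \<Sum>k\<in>K. f k x)"
  using assms
proof (induction K rule: infinite_finite_induct)
  case (infinite A) then show ?case by (simp add: SQ_zero)
next
  case empty then show ?case by (simp add: SQ_zero)
next
  case (insert a A) then show ?case by (simp add: SQ_add)
qed

lemma SQ_const: assumes "finite_measure M" shows "SQ M (\<lambda>x. c)"
  unfolding SQ_def using assms by (simp add: finite_measure.integrable_const)

lemma SQ_integrable:
  fixes f :: "'a \<Rightarrow> real"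
  assumes "finite_measure M" "SQ M f" shows "integrable M f"
  using finite_measure.square_integrable_imp_integrable[OF assms(1), of f] assms(2)
  unfolding SQ_def by simp

lemma SQ_integrable_vec:
  fixes f :: "'a \<Rightarrow> real^'s"
  assumes "finite_measure M" "SQ M f" shows "integrable M f"
proof -
  have "SQ M (\<lambda>x. norm (f x))" using assms(2) unfolding SQ_def by auto
  hence "integrable M (\<lambda>x. norm (f x))" using SQ_integrable assms(1) by blast
  thus ?thesis using assms(2) unfolding SQ_def by (simp add: integrable_norm_iff)
qed

lemma SQ_mult_integrable:
  fixes f g :: "'a \<Rightarrow> real"
  assumes "SQ M f" "SQ M g" shows "integrable M (\<lambda>x. f x * g x)"
proof -
  have i: "integrable M (\<lambda>x. (f x)\<^sup>2 + (g x)\<^sup>2)" using assms unfolding SQ_def by auto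
  show ?thesis
  proof (rule Bochner_Integration.integrable_bound[OF i])
    show "(\<lambda>x. f x * g x) \<in> borel_measurable M" using assms unfolding SQ_def by auto
    show "AE x in M. norm (f x * g x) \<le> norm ((f x)\<^sup>2 + (g x)\<^sup>2)"
    proof (rule AE_I2)
      fix x
      have "\<bar>f x\<bar> * \<bar>g x\<bar> \<le> (f x)\<^sup>2 + (g x)\<^sup>2"
        using zero_le_power2[of "\<bar>f x\<bar> - \<bar>g x\<bar>"] zero_le_power2[of "f x"] zero_le_power2[of "g x"]
        by (simp only: power2_diff power2_abs; linarith?)
      thus "norm (f x * g x) \<le> norm ((f x)\<^sup>2 + (g x)\<^sup>2)" by (simp add: abs_mult)
    qed
  qed
qed

lemma SQ_comp_vec:
  fixes f :: "'a \<Rightarrow> real^'s"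
  assumes "SQ M f" shows "SQ M (\<lambda>x. f x $ i)" "SQ M (\<lambda>x. u \<bullet> f x)"
proof -
  show "SQ M (\<lambda>x. f x $ i)"
    by (rule SQ_bound[OF assms, where K=1]) (use assms in \<open>auto simp: SQ_def component_le_norm_cart intro!: bl_meas[where h="\<lambda>v. v $ i"]\<close>)
  show "SQ M (\<lambda>x. u \<bullet> f x)"
    by (rule SQ_bound[OF assms, where K="norm u"]) (use assms in \<open>auto simp: SQ_def Cauchy_Schwarz_ineq2\<close>)
qed

lemma SQ_mat:
  fixes f :: "'a \<Rightarrow> real^'s"
  assumes "SQ M f" shows "SQ M (\<lambda>x. A *v f x)"
proof -
  obtain K where K: "\<And>x. norm (A *v x) \<le> norm x * K"
    using bounded_linear.bounded[OF matrix_vector_mul_bounded_linear[of A]] by blast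
  show ?thesis
    by (rule SQ_bound[OF assms, where K=K]) (use assms K in \<open>auto simp: SQ_def mult.commute intro!: bl_meas[where h="(*v) A"]\<close>)
qed

lemma SQ_diff_const:
  fixes f :: "'a \<Rightarrow> real"
  assumes "finite_measure M" "SQ M f" shows "SQ M (\<lambda>x. f x - c)"
  using SQ_add[OF assms(2) SQ_const[OF assms(1), of "-c"]] by simp

lemma symf_entries:
  fixes A :: "real^'s^'s"
  assumes "\<And>i j. A $ i $ j = A $ j $ i"
  shows "symf A"
  unfolding symf_def
proof (intro allI)
  fix x y :: "real^'s"
  have "x \<bullet> (A *v y) = (\<Sum>i\<in>UNIV. \<Sum>j\<in>UNIV. x $ i * A $ i $ j * y $ j)"
    by (simp add: inner_vec_def matrix_vector_mult_def sum_distrib_left mult.assoc)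
  also have "\<dots> = (\<Sum>j\<in>UNIV. \<Sum>i\<in>UNIV. x $ i * A $ i $ j * y $ j)" by (rule sum.swap)
  also have "\<dots> = (\<Sum>j\<in>UNIV. \<Sum>i\<in>UNIV. y $ j * A $ j $ i * x $ i)"
    using assms by (simp add: mult.commute mult.left_commute)
  also have "\<dots> = y \<bullet> (A *v x)"
    by (simp add: inner_vec_def matrix_vector_mult_def sum_distrib_left mult.assoc)
  finally show "x \<bullet> (A *v y) = y \<bullet> (A *v x)" .
qed

lemma symf_cov: "symf (cov_matrix M X)"
  by (rule symf_entries) (simp add: cov_matrix_def mult.commute)

lemma cov_quad:
  fixes X :: "'a \<Rightarrow> real^'s"
  assumes P: "prob_space M" and SQX: "SQ M X"
  shows "w \<bullet> (cov_matrix M X *v w) = (\<integral>x. (w \<bullet> X x - (\<integral>y. w \<bullet> X y \<partial>M))\<^sup>2 \<partial>M)"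
proof -
  interpret prob_space M by (rule P)
  define m where "m i = (\<integral>y. X y $ i \<partial>M)" for i
  define c where "c i x = X x $ i - m i" for i x
  have SQc: "SQ M (c i)" for i unfolding c_def
    by (rule SQ_diff_const) (auto intro: SQ_comp_vec[OF SQX] finite_measure_axioms)
  have intc: "integrable M (\<lambda>x. (w $ i * c i x) * (w $ j * c j x))" for i j
  proof -
    have "integrable M (\<lambda>x. c i x * c j x)" by (rule SQ_mult_integrable[OF SQc SQc])
    hence "integrable M (\<lambda>x. (w $ i * w $ j) * (c i x * c j x))" by simp
    thus ?thesis by (simp add: algebra_simps)
  qed
  have intX: "integrable M (\<lambda>x. X x $ i)" for i
    by (rule SQ_integrable[OF finite_measure_axioms SQ_comp_vec(1)[OF SQX]])
  have "w \<bullet> (cov_matrix M X *v w) = (\<Sum>i\<in>UNIV. \<Sum>j\<in>UNIV. w $ i * (\<integral>x. c i x * c j x \<partial>M) * w $ j)"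
    by (simp add: inner_vec_def matrix_vector_mult_def cov_matrix_def c_def m_def sum_distrib_left mult.assoc)
  also have "\<dots> = (\<Sum>i\<in>UNIV. \<Sum>j\<in>UNIV. (\<integral>x. (w $ i * c i x) * (w $ j * c j x) \<partial>M))"
    by (simp add: algebra_simps)
  also have "\<dots> = (\<Sum>i\<in>UNIV. (\<integral>x. (\<Sum>j\<in>UNIV. (w $ i * c i x) * (w $ j * c j x)) \<partial>M))"
    by (simp add: intc)
  also have "\<dots> = (\<integral>x. (\<Sum>i\<in>UNIV. \<Sum>j\<in>UNIV. (w $ i * c i x) * (w $ j * c j x)) \<partial>M)"
    by (subst Bochner_Integration.integral_sum[where I=UNIV and f="\<lambda>i x. \<Sum>j\<in>UNIV. (w $ i * c i x) * (w $ j * c j x)"])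
       (auto intro!: integrable_sum intc)
  also have "\<dots> = (\<integral>x. (\<Sum>i\<in>UNIV. w $ i * c i x)\<^sup>2 \<partial>M)"
    by (simp add: power2_eq_square sum_product)
  also have "\<dots> = (\<integral>x. (w \<bullet> X x - (\<integral>y. w \<bullet> X y \<partial>M))\<^sup>2 \<partial>M)"
  proof -
    have e: "(\<integral>y. w \<bullet> X y \<partial>M) = (\<Sum>i\<in>UNIV. w $ i * m i)"
      unfolding inner_vec_def m_def by (subst Bochner_Integration.integral_sum) (auto intro: intX)
    have "(\<Sum>i\<in>UNIV. w $ i * c i x) = w \<bullet> X x - (\<integral>y. w \<bullet> X y \<partial>M)" for x
      unfolding e c_def by (simp add: inner_vec_def right_diff_distrib sum_subtractf)
    thus ?thesis by simp
  qed
  finally show ?thesis .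
qed

lemma var_nonneg: "0 \<le> (\<integral>x. (f x - c)\<^sup>2 \<partial>M)" for f :: "'a \<Rightarrow> real"
  by (rule integral_nonneg_AE) auto

lemma var_sum_indep:
  fixes Y :: "'i \<Rightarrow> 'a \<Rightarrow> real"
  assumes P: "prob_space M" and K: "finite K" and SQY: "\<And>k. k \<in> K \<Longrightarrow> SQ M (Y k)"
    and ind: "\<And>j k. j \<in> K \<Longrightarrow> k \<in> K \<Longrightarrow> j \<noteq> k \<Longrightarrow> prob_space.indep_var M borel (Y j) borel (Y k)"
  shows "(\<integral>x. ((\<Sum>k\<in>K. Y k x) - (\<integral>y. (\<Sum>k\<in>K. Y k y) \<partial>M))\<^sup>2 \<partial>M)
       = (\<Sum>k\<in>K. \<integral>x. (Y k x - (\<integral>y. Y k y \<partial>M))\<^sup>2 \<partial>M)"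
proof -
  interpret prob_space M by (rule P)
  define Z where "Z k x = Y k x - (\<integral>y. Y k y \<partial>M)" for k x
  have intY: "k \<in> K \<Longrightarrow> integrable M (Y k)" for k using SQ_integrable[OF finite_measure_axioms SQY] .
  have SQZ: "k \<in> K \<Longrightarrow> SQ M (Z k)" for k unfolding Z_def by (rule SQ_diff_const[OF finite_measure_axioms SQY])
  have intZ: "k \<in> K \<Longrightarrow> integrable M (Z k)" for k using SQ_integrable[OF finite_measure_axioms SQZ] .
  have EZ: "k \<in> K \<Longrightarrow> (\<integral>x. Z k x \<partial>M) = 0" for k
    unfolding Z_def using intY by (simp add: prob_space)
  have cross: "(\<integral>x. Z j x * Z k x \<partial>M) = (if j = k then (\<integral>x. (Z k x)\<^sup>2 \<partial>M) else 0)"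
    if "j \<in> K" "k \<in> K" for j k
  proof (cases "j = k")
    case True then show ?thesis by (simp add: power2_eq_square)
  next
    case False
    have "indep_var borel (\<lambda>x. Y j x - (\<integral>y. Y j y \<partial>M)) borel (\<lambda>x. Y k x - (\<integral>y. Y k y \<partial>M))"
      using indep_var_compose[OF ind[OF that False], of "\<lambda>t. t - (\<integral>y. Y j y \<partial>M)" borel
          "\<lambda>t. t - (\<integral>y. Y k y \<partial>M)" borel]
      by (simp add: comp_def)
    hence "(\<integral>x. Z j x * Z k x \<partial>M) = (\<integral>x. Z j x \<partial>M) * (\<integral>x. Z k x \<partial>M)"
      unfolding Z_def[abs_def] using intZ that unfolding Z_def[abs_def]
      by (intro indep_var_lebesgue_integral) auto
    thus ?thesis using EZ that False by simp
  qed
  have intZZ: "j \<in> K \<Longrightarrow> k \<in> K \<Longrightarrow> integrable M (\<lambda>x. Z j x * Z k x)" for j k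
    using SQ_mult_integrable[OF SQZ SQZ] by blast
  have e: "(\<Sum>k\<in>K. Y k x) - (\<integral>y. (\<Sum>k\<in>K. Y k y) \<partial>M) = (\<Sum>k\<in>K. Z k x)" for x
    unfolding Z_def using intY by (simp add: Bochner_Integration.integral_sum sum_subtractf)
  have "(\<integral>x. ((\<Sum>k\<in>K. Y k x) - (\<integral>y. (\<Sum>k\<in>K. Y k y) \<partial>M))\<^sup>2 \<partial>M)
      = (\<integral>x. (\<Sum>j\<in>K. \<Sum>k\<in>K. Z j x * Z k x) \<partial>M)"
    unfolding e by (simp add: power2_eq_square sum_product)
  also have "\<dots> = (\<Sum>j\<in>K. \<Sum>k\<in>K. (\<integral>x. Z j x * Z k x \<partial>M))"
    using intZZ by (simp add: Bochner_Integration.integral_sum integrable_sum)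
  also have "\<dots> = (\<Sum>j\<in>K. \<Sum>k\<in>K. (if j = k then (\<integral>x. (Z k x)\<^sup>2 \<partial>M) else 0))"
    by (intro sum.cong refl cross) auto
  also have "\<dots> = (\<Sum>k\<in>K. \<integral>x. (Z k x)\<^sup>2 \<partial>M)"
    using K by (simp add: if_distrib sum.delta cong: if_cong)
  finally show ?thesis unfolding Z_def .
qed

lemma shifted_sets: "sets (shifted F \<theta>) = sets borel"
  by (simp add: shifted_def)

lemma shifted_prob:
  assumes "population F" shows "prob_space (shifted F \<theta>)"
proof -
  have p: "prob_space F" and s: "sets F = sets borel" using assms by (auto simp: population_def)
  have "(\<lambda>x. x + \<theta>) \<in> measurable F borel"
    by (subst measurable_cong_sets[OF s refl]) (intro borel_measurable_continuous_onI continuous_intros)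
  thus ?thesis unfolding shifted_def by (rule prob_space.prob_space_distr[OF p])
qed

definition blk :: "nat \<Rightarrow> nat \<Rightarrow> (nat \<times> nat \<Rightarrow> 'a) \<Rightarrow> (nat \<Rightarrow> 'a)" where
  "blk m k \<omega> = (\<lambda>i\<in>{..<m}. \<omega> (k, i))"

context
  fixes F :: "nat \<Rightarrow> (real^'s) measure" and N :: nat and n :: "nat \<Rightarrow> nat" and \<theta> :: "real^'s"
  assumes pop: "\<forall>k<N. population (F k)"
begin

definition "II = (SIGMA k:{..<N}. {..<n k})"
definition "Ms = (\<lambda>j. shifted ((\<lambda>(k, i). F k) j) \<theta>)"
definition "PP = sample_law II (\<lambda>(k, i). F k) \<theta>"

lemma PP_eq: "PP = PiM II Ms" unfolding PP_def sample_law_def Ms_def ..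

lemma Ms_prob: "j \<in> II \<Longrightarrow> prob_space (Ms j)"
  using pop unfolding II_def Ms_def by (auto intro!: shifted_prob)

lemma Ms_sets: "sets (Ms j) = sets borel" unfolding Ms_def by (simp add: shifted_sets)

lemma PP_prob: "prob_space PP"
  unfolding PP_eq by (rule prob_space_PiM) (rule Ms_prob)

lemma blk_meas:
  assumes "k < N"
  shows "blk (n k) k \<in> measurable PP (PiM {..<n k} (\<lambda>_. borel))"
  unfolding blk_def PP_eq
proof (rule measurable_restrict)
  fix i assume "i \<in> {..<n k}"
  hence "(k, i) \<in> II" using assms unfolding II_def by auto
  hence "(\<lambda>\<omega>. \<omega> (k, i)) \<in> measurable (PiM II Ms) (Ms (k, i))" by (rule measurable_component_singleton)
  thus "(\<lambda>\<omega>. \<omega> (k, i)) \<in> measurable (PiM II Ms) borel"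
    using measurable_cong_sets[OF refl Ms_sets] by blast
qed

lemma blk_distr:
  assumes "k < N"
  shows "distr PP (PiM {..<n k} (\<lambda>_. borel)) (blk (n k) k) = sample_law {..<n k} (\<lambda>_. F k) \<theta>"
proof -
  have "distr (PiM II Ms) (PiM {..<n k} (\<lambda>i. Ms (k, i))) (\<lambda>\<omega>. \<lambda>i\<in>{..<n k}. \<omega> (k, i))
        = PiM {..<n k} (\<lambda>i. Ms (k, i))"
    using assms by (intro distr_PiM_reindex Ms_prob) (auto simp: II_def inj_on_def)
  moreover have "PiM {..<n k} (\<lambda>i. Ms (k, i)) = sample_law {..<n k} (\<lambda>_. F k) \<theta>"
    unfolding sample_law_def Ms_def by simp
  moreover have "distr (PiM II Ms) (PiM {..<n k} (\<lambda>i. Ms (k, i))) (\<lambda>\<omega>. \<lambda>i\<in>{..<n k}. \<omega> (k, i))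
      = distr PP (PiM {..<n k} (\<lambda>_. borel)) (blk (n k) k)"
    unfolding PP_eq blk_def by (intro distr_cong refl sets_PiM_cong) (simp add: Ms_sets)
  ultimately show ?thesis by simp
qed

lemma coord_indep:
  assumes "II \<noteq> {}"
  shows "prob_space.indep_vars PP Ms (\<lambda>j \<omega>. \<omega> j) II"
proof -
  interpret prob_space PP by (rule PP_prob)
  show ?thesis
  proof (subst indep_vars_iff_distr_eq_PiM'[OF assms])
    show "random_variable (Ms i) (\<lambda>\<omega>. \<omega> i)" if "i \<in> II" for i
      unfolding PP_eq using that by (rule measurable_component_singleton)
    have "distr (PiM II Ms) (PiM II (\<lambda>i. Ms (id i))) (\<lambda>\<omega>. \<lambda>n\<in>II. \<omega> (id n)) = PiM II (\<lambda>i. Ms (id i))"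
      by (intro distr_PiM_reindex Ms_prob) auto
    hence "distr PP (PiM II Ms) (\<lambda>x. \<lambda>i\<in>II. x i) = PiM II Ms" unfolding PP_eq by simp
    also have "\<dots> = PiM II (\<lambda>i. distr PP (Ms i) (\<lambda>x. x i))"
      unfolding PP_eq by (intro PiM_cong refl distr_PiM_component[symmetric] Ms_prob) auto
    finally show "distr PP (PiM II Ms) (\<lambda>x. \<lambda>i\<in>II. x i) = PiM II (\<lambda>i. distr PP (Ms i) (\<lambda>x. x i))" .
  qed
qed

lemma blk_indep:
  assumes "j < N" "k < N" "j \<noteq> k" "II \<noteq> {}"
    and gj: "gj \<in> borel_measurable (PiM {..<n j} (\<lambda>_. borel))"
    and gk: "gk \<in> borel_measurable (PiM {..<n k} (\<lambda>_. borel))"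
  shows "prob_space.indep_var PP borel (\<lambda>\<omega>. gj (blk (n j) j \<omega>)) borel (\<lambda>\<omega>. gk (blk (n k) k \<omega>))"
proof -
  interpret prob_space PP by (rule PP_prob)
  let ?A = "{j} \<times> {..<n j}" and ?B = "{k} \<times> {..<n k}"
  have ind: "indep_var (PiM ?A Ms) (\<lambda>\<omega>. restrict (\<lambda>i. \<omega> i) ?A) (PiM ?B Ms) (\<lambda>\<omega>. restrict (\<lambda>i. \<omega> i) ?B)"
    using assms by (intro indep_var_restrict[OF coord_indep]) (auto simp: II_def)
  have mj: "(\<lambda>r. g (blk (n m) m r)) \<in> borel_measurable (PiM ({m} \<times> {..<n m}) Ms)"
    if g: "g \<in> borel_measurable (PiM {..<n m} (\<lambda>_. borel))" for g m
  proof -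
    have "blk (n m) m \<in> measurable (PiM ({m} \<times> {..<n m}) Ms) (PiM {..<n m} (\<lambda>_. borel))"
      unfolding blk_def
    proof (rule measurable_restrict)
      fix i assume "i \<in> {..<n m}"
      hence "(\<lambda>\<omega>. \<omega> (m, i)) \<in> measurable (PiM ({m} \<times> {..<n m}) Ms) (Ms (m, i))" by (intro measurable_component_singleton) auto
      thus "(\<lambda>\<omega>. \<omega> (m, i)) \<in> measurable (PiM ({m} \<times> {..<n m}) Ms) borel"
        using measurable_cong_sets[OF refl Ms_sets] by blast
    qed
    thus ?thesis using g by (rule measurable_compose)
  qed
  have "indep_var borel ((\<lambda>r. gj (blk (n j) j r)) \<circ> (\<lambda>\<omega>. restrict (\<lambda>i. \<omega> i) ?A))
                      borel ((\<lambda>r. gk (blk (n k) k r)) \<circ> (\<lambda>\<omega>. restrict (\<lambda>i. \<omega> i) ?B))"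
    by (rule indep_var_compose[OF ind mj[OF gj] mj[OF gk]])
  moreover have "((\<lambda>r. gj (blk (n j) j r)) \<circ> (\<lambda>\<omega>. restrict (\<lambda>i. \<omega> i) ?A)) = (\<lambda>\<omega>. gj (blk (n j) j \<omega>))"
    by (auto simp: blk_def fun_eq_iff intro!: arg_cong[where f=gj])
  moreover have "((\<lambda>r. gk (blk (n k) k r)) \<circ> (\<lambda>\<omega>. restrict (\<lambda>i. \<omega> i) ?B)) = (\<lambda>\<omega>. gk (blk (n k) k \<omega>))"
    by (auto simp: blk_def fun_eq_iff intro!: arg_cong[where f=gk])
  ultimately show ?thesis by simp
qed

end

lemma matrix_sum_vec:
  fixes A :: "'k \<Rightarrow> real^'s^'s"
  shows "(\<Sum>k\<in>K. A k) *v x = (\<Sum>k\<in>K. A k *v x)"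
  by (induction K rule: infinite_finite_induct) (auto simp: matrix_vector_mult_add_rdistrib)

lemma SQ_distr:
  fixes g :: "'b \<Rightarrow> 'c::real_normed_vector"
  assumes f: "f \<in> measurable M N" and g: "SQ (distr M N f) g"
  shows "SQ M (\<lambda>x. g (f x))"
proof -
  have gm: "g \<in> borel_measurable N" using g unfolding SQ_def by simp
  have i: "integrable (distr M N f) (\<lambda>x. (norm (g x))\<^sup>2)" using g unfolding SQ_def by simp
  have mb: "(\<lambda>x. (norm (g x))\<^sup>2) \<in> borel_measurable N" using gm by measurable
  have "integrable M (\<lambda>x. (norm (g (f x)))\<^sup>2)" using integrable_distr_eq[OF f mb] i by simp
  moreover have "(\<lambda>x. g (f x)) \<in> borel_measurable M" using f gm by (rule measurable_compose)
  ultimately show ?thesis unfolding SQ_def by simp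
qed

lemma var_distr:
  fixes g :: "'b \<Rightarrow> real"
  assumes f: "f \<in> measurable M N" and g: "g \<in> borel_measurable N"
  shows "(\<integral>x. (g (f x) - (\<integral>y. g (f y) \<partial>M))\<^sup>2 \<partial>M)
       = (\<integral>z. (g z - (\<integral>y. g y \<partial>distr M N f))\<^sup>2 \<partial>distr M N f)"
proof -
  have 1: "(\<integral>y. g y \<partial>distr M N f) = (\<integral>y. g (f y) \<partial>M)" by (rule integral_distr[OF f g])
  have 2: "(\<integral>z. (g z - c)\<^sup>2 \<partial>distr M N f) = (\<integral>x. (g (f x) - c)\<^sup>2 \<partial>M)" for c
    by (rule integral_distr[OF f]) (use g in measurable)
  show ?thesis by (simp add: 1 2)
qed

lemma blk_meas2:
  assumes "\<And>i. i < m \<Longrightarrow> (k, i) \<in> I"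
  shows "blk m k \<in> measurable (PiM I (\<lambda>_. borel)) (PiM {..<m} (\<lambda>_. borel))"
  unfolding blk_def
proof (rule measurable_restrict)
  fix i assume "i \<in> {..<m}"
  thus "(\<lambda>\<omega>. \<omega> (k, i)) \<in> measurable (PiM I (\<lambda>_. borel)) borel"
    using assms by (intro measurable_component_singleton) auto
qed

lemma sample_law_sets: "sets (sample_law I Fs \<theta>) = sets (PiM I (\<lambda>_. borel))"
  unfolding sample_law_def by (intro sets_PiM_cong) (auto simp: shifted_sets)

theorem mainTheorem12:
  fixes F :: "nat \<Rightarrow> (real^'s) measure"
    and N :: nat and n :: "nat \<Rightarrow> nat"
    and T :: "nat \<Rightarrow> (nat \<Rightarrow> real^'s) \<Rightarrow> real^'s"
    and Tpool :: "(nat \<times> nat \<Rightarrow> real^'s) \<Rightarrow> real^'s"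
    and \<theta> :: "real^'s"
  assumes "N \<ge> 1"
    and "\<forall>k<N. n k \<ge> 1"
    and "\<forall>k<N. population (F k)"
    and "\<forall>k<N. pitman {..<n k} (\<lambda>_. F k) (T k)"
    and "pitman (SIGMA k:{..<N}. {..<n k}) (\<lambda>(k, i). F k) Tpool"
    and "\<forall>k<N. invertible (cov_matrix (sample_law {..<n k} (\<lambda>_. F k) \<theta>) (T k))"
    and "invertible (cov_matrix (sample_law (SIGMA k:{..<N}. {..<n k}) (\<lambda>(k, i). F k) \<theta>) Tpool)"
  shows "loewner_le
           (\<Sum>k<N. matrix_inv (cov_matrix (sample_law {..<n k} (\<lambda>_. F k) \<theta>) (T k)))
           (matrix_inv (cov_matrix (sample_law (SIGMA k:{..<N}. {..<n k}) (\<lambda>(k, i). F k) \<theta>) Tpool))"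
proof -
  define I where "I = (SIGMA k:{..<N}. {..<n k})"
  define Fp :: "nat \<times> nat \<Rightarrow> (real^'s) measure" where "Fp = (\<lambda>(k, i). F k)"
  define P where "P = sample_law I Fp \<theta>"
  define L where "L k = sample_law {..<n k} (\<lambda>_. F k) \<theta>" for k
  define V where "V k = cov_matrix (L k) (T k)" for k
  define W where "W k = matrix_inv (V k)" for k
  define V0 where "V0 = cov_matrix P Tpool"
  define W0 where "W0 = matrix_inv V0"
  define S where "S = (\<Sum>k<N. W k)"
  have pop: "\<forall>k<N. population (F k)" by (rule assms(3))
  have PPe: "PP F N n \<theta>' = sample_law I Fp \<theta>'" for \<theta>'
    using PP_def[OF pop] II_def[OF pop] unfolding I_def Fp_def by simp
  have Pprob: "prob_space P" using PP_prob[OF pop, of n \<theta>] PPe P_def by simp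
  have Lprob: "k < N \<Longrightarrow> prob_space (L k)" for k
    unfolding L_def sample_law_def using assms(3) by (auto intro!: prob_space_PiM shifted_prob)
  have "(0, 0) \<in> I" using assms(1,2) unfolding I_def by auto
  hence I0: "I \<noteq> {}" and II0: "II N n \<noteq> {}"
    using II_def[OF pop] unfolding I_def by auto
  have admT: "k < N \<Longrightarrow> admissible_est {..<n k} (\<lambda>_. F k) (T k)" for k
    using assms(4) unfolding pitman_def by auto
  have mT: "k < N \<Longrightarrow> T k \<in> borel_measurable (PiM {..<n k} (\<lambda>_. borel))" for k
    using admT unfolding admissible_est_def equivariant_def by auto
  have SQT: "SQ (sample_law {..<n k} (\<lambda>_. F k) \<theta>') (T k)" if k: "k < N" for k \<theta>'
  proof -
    have "T k \<in> borel_measurable (sample_law {..<n k} (\<lambda>_. F k) \<theta>')"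
      by (subst measurable_cong_sets[OF sample_law_sets refl]) (rule mT[OF k])
    thus ?thesis using admT[OF k] unfolding SQ_def admissible_est_def by auto
  qed
  have SQblk: "SQ (sample_law I Fp \<theta>') (\<lambda>\<omega>. T k (blk (n k) k \<omega>))" if k: "k < N" for k \<theta>'
  proof -
    have "SQ (distr (PP F N n \<theta>') (PiM {..<n k} (\<lambda>_. borel)) (blk (n k) k)) (T k)"
      using SQT[OF k] blk_distr[OF pop k] by simp
    from SQ_distr[OF blk_meas[OF pop k] this] show ?thesis by (simp add: PPe)
  qed
  have Vquad: "u \<bullet> (V k *v u) = (\<integral>x. (u \<bullet> T k x - (\<integral>y. u \<bullet> T k y \<partial>L k))\<^sup>2 \<partial>L k)"
    if k: "k < N" for k u
    unfolding V_def using cov_quad[OF Lprob[OF k], of "T k"] SQT[OF k] unfolding L_def by simp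
  have Vpsd: "k < N \<Longrightarrow> 0 \<le> u \<bullet> (V k *v u)" for k u using Vquad var_nonneg by simp
  have Vsym: "symf (V k)" for k unfolding V_def by (rule symf_cov)
  have Vinv: "k < N \<Longrightarrow> invertible (V k)" for k using assms(6) unfolding V_def L_def by simp
  have WV: "k < N \<Longrightarrow> W k ** V k = mat 1" for k unfolding W_def using matrix_inv_both Vinv by blast
  have VWv: "k < N \<Longrightarrow> V k *v (W k *v x) = x" for k x unfolding W_def using matrix_inv_vec Vinv by blast
  have Wquad: "0 \<le> x \<bullet> (W k *v x)" if k: "k < N" for k x
  proof -
    have "x \<bullet> (W k *v x) = (V k *v (W k *v x)) \<bullet> (W k *v x)" using VWv[OF k] by simp
    also have "\<dots> = (W k *v x) \<bullet> (V k *v (W k *v x))" by (rule inner_commute)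
    finally show ?thesis using Vpsd[OF k] by simp
  qed
  have Sker: "x = 0" if Sx: "S *v x = 0" for x
  proof -
    have "(\<Sum>k<N. x \<bullet> (W k *v x)) = x \<bullet> (S *v x)"
      unfolding S_def matrix_sum_vec inner_sum_right ..
    also have "\<dots> = 0" using Sx by simp
    finally have "\<forall>k\<in>{..<N}. x \<bullet> (W k *v x) = 0"
      using sum_nonneg_eq_0_iff[of "{..<N}" "\<lambda>k. x \<bullet> (W k *v x)"] Wquad by auto
    hence z: "x \<bullet> (W 0 *v x) = 0" using assms(1) by auto
    have N0: "0 < N" using assms(1) by simp
    have "(W 0 *v x) \<bullet> (V 0 *v (W 0 *v x)) = 0"
      using z VWv[OF N0] by (simp add: inner_commute)
    hence "V 0 *v (W 0 *v x) = 0"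
      by (intro psd_kernel[OF Vsym] Vpsd[OF N0])
    thus "x = 0" using VWv[OF N0] by simp
  qed
  have "inj ((*v) S)"
  proof (rule injI)
    fix a b assume "S *v a = S *v b"
    hence "S *v (a - b) = 0" by (simp add: matrix_vector_mult_diff_distrib)
    hence "a - b = 0" by (rule Sker)
    thus "a = b" by simp
  qed
  hence Sinv: "invertible S"
    using matrix_left_invertible_injective invertible_left_inverse by blast
  define R where "R = matrix_inv S"
  have RS: "R ** S = mat 1" "S ** R = mat 1" unfolding R_def using matrix_inv_both[OF Sinv] by auto
  define T' where "T' \<omega> = R *v (\<Sum>k<N. W k *v T k (blk (n k) k \<omega>))" for \<omega>
  have blkm: "k < N \<Longrightarrow> blk (n k) k \<in> measurable (PiM I (\<lambda>_. borel)) (PiM {..<n k} (\<lambda>_. borel))" for k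
    by (rule blk_meas2) (auto simp: I_def)
  have mT': "T' \<in> borel_measurable (PiM I (\<lambda>_. borel))"
  proof -
    have c1: "(\<lambda>\<omega>. T k (blk (n k) k \<omega>)) \<in> borel_measurable (PiM I (\<lambda>_. borel))" if "k < N" for k
      using blkm[OF that] mT[OF that] by (rule measurable_compose)
    have c2: "(\<lambda>\<omega>. W k *v T k (blk (n k) k \<omega>)) \<in> borel_measurable (PiM I (\<lambda>_. borel))" if "k < N" for k
      by (rule bl_meas[where h="(*v) (W k)", OF matrix_vector_mul_bounded_linear c1[OF that]])
    have c3: "(\<lambda>\<omega>. (\<Sum>k<N. W k *v T k (blk (n k) k \<omega>))) \<in> borel_measurable (PiM I (\<lambda>_. borel))"
      by (rule borel_measurable_sum) (rule c2, simp)
    show ?thesis unfolding T'_def[abs_def]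
      by (rule bl_meas[where h="(*v) R", OF matrix_vector_mul_bounded_linear c3])
  qed
  have eqT: "k < N \<Longrightarrow> x \<in> {..<n k} \<rightarrow>\<^sub>E UNIV \<Longrightarrow> T k (\<lambda>i\<in>{..<n k}. x i + c) = T k x + c" for k x c
    using admT unfolding admissible_est_def equivariant_def by blast
  have equiv: "T' (\<lambda>j\<in>I. x j + c) = T' x + c" for x c
  proof -
    have b: "blk (n k) k (\<lambda>j\<in>I. x j + c) = (\<lambda>i\<in>{..<n k}. blk (n k) k x i + c)" if "k < N" for k
      using that by (auto simp: blk_def I_def fun_eq_iff)
    have "(\<Sum>k<N. W k *v T k (blk (n k) k (\<lambda>j\<in>I. x j + c)))
        = (\<Sum>k<N. W k *v T k (blk (n k) k x) + W k *v c)"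
    proof (intro sum.cong refl)
      fix k assume "k \<in> {..<N}"
      hence k: "k < N" by simp
      have ext: "blk (n k) k x \<in> {..<n k} \<rightarrow>\<^sub>E UNIV" by (simp add: blk_def)
      have "T k (blk (n k) k (\<lambda>j\<in>I. x j + c)) = T k (blk (n k) k x) + c"
        unfolding b[OF k] by (rule eqT[OF k ext])
      thus "W k *v T k (blk (n k) k (\<lambda>j\<in>I. x j + c)) = W k *v T k (blk (n k) k x) + W k *v c"
        by (simp add: matrix_vector_right_distrib)
    qed
    also have "\<dots> = (\<Sum>k<N. W k *v T k (blk (n k) k x)) + S *v c"
      unfolding S_def matrix_sum_vec by (simp add: sum.distrib)
    finally show ?thesis unfolding T'_def
      by (simp add: matrix_vector_right_distrib matrix_vector_mul_assoc RS)
  qed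
  have SQT': "SQ (sample_law I Fp \<theta>') T'" for \<theta>'
    unfolding T'_def by (intro SQ_mat SQ_sum SQblk) auto
  have admT': "admissible_est I Fp T'"
    unfolding admissible_est_def equivariant_def using mT' equiv SQT' by (auto simp: SQ_def)
  have pit: "loewner_le V0 (cov_matrix P T')"
    using assms(5) admT' unfolding pitman_def V0_def P_def I_def Fp_def by blast
  have key: "(x v* S) \<bullet> (V0 *v (x v* S)) \<le> x \<bullet> (S *v x)" for x
  proof -
    define w where "w = x v* S"
    define u where "u k = x v* W k" for k
    define Y where "Y k \<omega> = u k \<bullet> T k (blk (n k) k \<omega>)" for k \<omega>
    have "0 \<le> w \<bullet> ((cov_matrix P T' - V0) *v w)" using pit unfolding loewner_le_def nonneg_def_def by blast
    hence 1: "w \<bullet> (V0 *v w) \<le> w \<bullet> (cov_matrix P T' *v w)"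
      by (simp add: matrix_vector_mult_diff_rdistrib inner_diff_right)
    have wT: "w \<bullet> T' \<omega> = (\<Sum>k<N. Y k \<omega>)" for \<omega>
    proof -
      have "w v* R = x" unfolding w_def vector_matrix_mul_assoc RS by simp
      hence "w \<bullet> T' \<omega> = x \<bullet> (\<Sum>k<N. W k *v T k (blk (n k) k \<omega>))"
        unfolding T'_def by (simp add: dot_lmul_matrix[symmetric])
      also have "\<dots> = (\<Sum>k<N. Y k \<omega>)"
        unfolding inner_sum_right Y_def u_def by (simp add: dot_lmul_matrix)
      finally show ?thesis .
    qed
    have "w \<bullet> (cov_matrix P T' *v w) = (\<integral>\<omega>. (w \<bullet> T' \<omega> - (\<integral>y. w \<bullet> T' y \<partial>P))\<^sup>2 \<partial>P)"
      using cov_quad[OF Pprob] SQT' unfolding P_def by blast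
    also have "\<dots> = (\<integral>\<omega>. ((\<Sum>k<N. Y k \<omega>) - (\<integral>y. (\<Sum>k<N. Y k y) \<partial>P))\<^sup>2 \<partial>P)"
      unfolding wT ..
    also have "\<dots> = (\<Sum>k<N. \<integral>\<omega>. (Y k \<omega> - (\<integral>y. Y k y \<partial>P))\<^sup>2 \<partial>P)"
    proof (rule var_sum_indep[OF Pprob])
      show "SQ P (Y k)" if "k \<in> {..<N}" for k
        unfolding Y_def P_def using SQ_comp_vec(2)[OF SQblk] that by auto
      show "prob_space.indep_var P borel (Y j) borel (Y k)"
        if "j \<in> {..<N}" "k \<in> {..<N}" "j \<noteq> k" for j k
      proof -
        have "prob_space.indep_var (PP F N n \<theta>) borel (\<lambda>\<omega>. (\<lambda>z. u j \<bullet> T j z) (blk (n j) j \<omega>))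
                  borel (\<lambda>\<omega>. (\<lambda>z. u k \<bullet> T k z) (blk (n k) k \<omega>))"
          using that II0 mT
          by (intro blk_indep[OF pop]) (auto intro!: borel_measurable_inner)
        thus ?thesis unfolding Y_def[abs_def] P_def PPe by simp
      qed
    qed auto
    also have "\<dots> = (\<Sum>k<N. u k \<bullet> (V k *v u k))"
    proof (rule sum.cong[OF refl])
      fix k assume "k \<in> {..<N}"
      hence k: "k < N" by simp
      have "(\<integral>\<omega>. (Y k \<omega> - (\<integral>y. Y k y \<partial>P))\<^sup>2 \<partial>P)
          = (\<integral>z. (u k \<bullet> T k z - (\<integral>y. u k \<bullet> T k y \<partial>distr P (PiM {..<n k} (\<lambda>_. borel)) (blk (n k) k)))\<^sup>2
                \<partial>distr P (PiM {..<n k} (\<lambda>_. borel)) (blk (n k) k))"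
        unfolding Y_def
        by (rule var_distr) (use blk_meas[OF pop k, of n \<theta>] mT[OF k] in \<open>auto simp: PPe P_def\<close>)
      also have "distr P (PiM {..<n k} (\<lambda>_. borel)) (blk (n k) k) = L k"
        using blk_distr[OF pop k, of n \<theta>] unfolding PPe P_def L_def .
      finally show "(\<integral>\<omega>. (Y k \<omega> - (\<integral>y. Y k y \<partial>P))\<^sup>2 \<partial>P) = u k \<bullet> (V k *v u k)"
        using Vquad[OF k] by simp
    qed
    also have "\<dots> = (\<Sum>k<N. x \<bullet> (W k *v x))"
    proof (rule sum.cong[OF refl])
      fix k assume "k \<in> {..<N}"
      hence k: "k < N" by simp
      have "u k \<bullet> (V k *v u k) = x \<bullet> (W k *v (V k *v u k))" unfolding u_def by (simp add: dot_lmul_matrix)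
      also have "\<dots> = x \<bullet> u k" by (simp add: matrix_vector_mul_assoc WV[OF k])
      also have "\<dots> = x \<bullet> (W k *v x)" unfolding u_def by (subst inner_commute, rule dot_lmul_matrix)
      finally show "u k \<bullet> (V k *v u k) = x \<bullet> (W k *v x)" .
    qed
    also have "\<dots> = x \<bullet> (S *v x)" unfolding S_def matrix_sum_vec inner_sum_right ..
    finally show ?thesis using 1 unfolding w_def by simp
  qed
  have SQP: "SQ P Tpool"
  proof -
    have a: "admissible_est I Fp Tpool" using assms(5) unfolding pitman_def I_def Fp_def by blast
    have "Tpool \<in> borel_measurable P"
      unfolding P_def by (subst measurable_cong_sets[OF sample_law_sets refl])
        (use a in \<open>auto simp: admissible_est_def equivariant_def\<close>)
    thus ?thesis using a unfolding SQ_def admissible_est_def P_def by auto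
  qed
  have V0psd: "0 \<le> v \<bullet> (V0 *v v)" for v
    unfolding V0_def using cov_quad[OF Pprob SQP] var_nonneg by simp
  have V0sym: "symf V0" unfolding V0_def by (rule symf_cov)
  have V0W0: "V0 *v (W0 *v x) = x" for x
    unfolding W0_def using matrix_inv_vec assms(7) unfolding V0_def P_def I_def Fp_def by blast
  have "nonneg_def (W0 - S)"
    unfolding nonneg_def_def
  proof
    fix x :: "real^'s"
    define y where "y = x v* S"
    define z where "z = W0 *v x"
    have Vz: "V0 *v z = x" unfolding z_def by (rule V0W0)
    have e1: "y \<bullet> (V0 *v z) = x \<bullet> (S *v x)" unfolding Vz y_def by (rule dot_lmul_matrix)
    have e2: "z \<bullet> (V0 *v y) = y \<bullet> (V0 *v z)" using V0sym unfolding symf_def by blast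
    have e3: "z \<bullet> (V0 *v z) = x \<bullet> (W0 *v x)" by (simp only: Vz, simp add: z_def inner_commute)
    have "0 \<le> (y - z) \<bullet> (V0 *v (y - z))" by (rule V0psd)
    also have "\<dots> = y \<bullet> (V0 *v y) - y \<bullet> (V0 *v z) - z \<bullet> (V0 *v y) + z \<bullet> (V0 *v z)"
      by (simp add: matrix_vector_mult_diff_distrib inner_diff_left inner_diff_right)
    finally have "0 \<le> y \<bullet> (V0 *v y) - 2 * (x \<bullet> (S *v x)) + x \<bullet> (W0 *v x)"
      using e1 e2 e3 by simp
    moreover have "y \<bullet> (V0 *v y) \<le> x \<bullet> (S *v x)" unfolding y_def by (rule key)
    ultimately show "0 \<le> x \<bullet> ((W0 - S) *v x)"
      by (simp add: matrix_vector_mult_diff_rdistrib inner_diff_right)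
  qed
  thus ?thesis unfolding loewner_le_def S_def W_def V_def L_def W0_def V0_def P_def I_def Fp_def .
qed

end
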